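(* Under the standing assumptions below, if $\alpha>5/\sqrt8$, then the inclination angle $\eta(\sigma)=\sigma+\theta(\sigma)$ satisfies $\eta(\sigma)<\pi/2$ for all $\sigma\in(0,\pi/2)$.
   Context: $L^2=L^2(0,\pi/2)$ with norm $\|f\|=\big(\int_0^{\pi/2}|f|^2\big)^{1/2}$. The kernel is $K(s,\sigma)=\log\Big|\frac{\sin(s+\sigma)}{\sin(s-\sigma)}\Big|$ and $(Hw)(\sigma)=\frac1\pi\int_0^{\pi/2}K(s,\sigma)\,w(s)\,ds$. For $\alpha>0$, $\varPhi(\zeta)(\sigma)=\frac{3}{\alpha\pi}\,\frac{\sin(\sigma+\frac13(H\zeta)(\sigma))\cot\sigma}{\exp\int_0^\sigma\zeta\,ds}$, $\sigma\in(0,\pi/2]$. Standing assumptions: $\zeta_*\in L^2$ is a non-negative solution of $\zeta_*=\varPhi(\zeta_* )$ with $\|\zeta_*\|\leqslant\frac{9\sqrt\pi}2$ and $0\le\sigma+\frac13(H\zeta_* )(\sigma)\le\pi$ for $\sigma\in(0,\pi/2)$ (such a solution exists for these $\alpha$), and $\theta=\frac13H\zeta_*$. *)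

theory Defs
  imports "HOL-Analysis.Analysis"
begin

text \<open>Functions on (0,pi/2) are represented as real => real functions; only their
values on [0,pi/2] matter. Integrals are Lebesgue integrals.\<close>

definition kernK :: "real \<Rightarrow> real \<Rightarrow> real" where
  "kernK s \<sigma> = ln \<bar>sin (s + \<sigma>) / sin (s - \<sigma>)\<bar>"

definition opH :: "(real \<Rightarrow> real) \<Rightarrow> real \<Rightarrow> real" where
  "opH w \<sigma> = (1 / pi) * (LINT s:{0..pi/2}|lebesgue. kernK s \<sigma> * w s)"

definition L2norm :: "(real \<Rightarrow> real) \<Rightarrow> real" where
  "L2norm f = sqrt (LINT s:{0..pi/2}|lebesgue. (f s)\<^sup>2)"

definition isL2 :: "(real \<Rightarrow> real) \<Rightarrow> bool" where
  "isL2 f \<longleftrightarrow> f \<in> borel_measurable lebesgue \<and>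
     set_integrable lebesgue {0..pi/2} (\<lambda>s. (f s)\<^sup>2)"

definition Phi :: "real \<Rightarrow> (real \<Rightarrow> real) \<Rightarrow> real \<Rightarrow> real" where
  "Phi \<alpha> \<zeta> \<sigma> = (3 / (\<alpha> * pi)) *
     (sin (\<sigma> + (1/3) * opH \<zeta> \<sigma>) * cot \<sigma>) /
     exp (LINT s:{0..\<sigma>}|lebesgue. \<zeta> s)"

end

theory Submission
  imports Defs "HOL-Real_Asymp.Real_Asymp"
begin

definition LL :: "real \<Rightarrow> real" where "LL u = ln \<bar>(u+1)/(u-1)\<bar>"
definition GG :: "real \<Rightarrow> real \<Rightarrow> real" where
 "GG \<beta> u = LL u * (u^2-1)/(2*(1+\<beta>^2)*(\<beta>^2+u^2)) + arctan(u/\<beta>)/(\<beta>*(1+\<beta>^2))"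

lemma LL_deriv:
  assumes "u > -1" "u \<noteq> 1"
  shows "(LL has_real_derivative (-2/(u^2-1))) (at u)"
proof (cases "u > 1")
  case True
  have "((\<lambda>x. ln (x+1) - ln (x-1)) has_real_derivative (1/(u+1) - 1/(u-1))) (at u)"
    using True by (auto intro!: derivative_eq_intros)
  then have d: "((\<lambda>x. ln (x+1) - ln (x-1)) has_real_derivative (-2/(u^2-1))) (at u)"
    using True by (simp add: field_simps power2_eq_square)
  show ?thesis
  proof (rule has_field_derivative_transform_within_open[OF d, of "{1<..}"])
    fix x :: real assume "x \<in> {1<..}"
    then show "ln (x+1) - ln (x-1) = LL x" unfolding LL_def by (simp add: ln_div)
  qed (use True in auto)
next
  case False
  then have u: "-1 < u" "u < 1" using assms by auto
  have "((\<lambda>x. ln (x+1) - ln (1-x)) has_real_derivative (1/(u+1) + 1/(1-u))) (at u)"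
    using u by (auto intro!: derivative_eq_intros)
  moreover have "1/(u+1) + 1/(1-u) = -2/(u^2-1)"
  proof -
    have "u^2 < 1" using u by (simp add: abs_square_less_1)
    then have "u^2 - 1 \<noteq> 0" "1 - u \<noteq> 0" "u + 1 \<noteq> 0" using u by auto
    then show ?thesis by (simp add: field_simps power2_eq_square)
  qed
  ultimately have d: "((\<lambda>x. ln (x+1) - ln (1-x)) has_real_derivative (-2/(u^2-1))) (at u)"
    by simp
  show ?thesis
  proof (rule has_field_derivative_transform_within_open[OF d, of "{-1<..<1}"])
    fix x :: real assume x: "x \<in> {-1<..<1}"
    then have "\<bar>(x+1)/(x-1)\<bar> = (x+1)/(1-x)" by (auto simp: abs_div field_simps)
    then show "ln (x+1) - ln (1-x) = LL x" unfolding LL_def using x by (simp add: ln_div)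
  qed (use u in auto)
qed

lemma aux1: fixes X P b :: real assumes "X > 0" "P > 0" "b > 0"
  shows "inverse (X/b^2) * (1/b) / (b*P) = 1/(P*X)"
  using assms by (simp add: field_simps power2_eq_square)

lemma aux2: fixes A X P :: real assumes "A \<noteq> 0" "X > 0" "P > 0"
  shows "(-2/A)*(A/(2*P*X)) = -1/(P*X)"
  using assms by (simp add: field_simps)

lemma aux3: fixes X P :: real assumes "X > 0" "P > 0"
  shows "(1 - P/X)/(2*P) = (X - P)/(2*P*X)"
  using assms by (simp add: field_simps)

lemma GG_deriv:
  assumes b: "\<beta> > 0" and "u > -1" "u \<noteq> 1"
  shows "(GG \<beta> has_real_derivative (LL u * u/(\<beta>^2+u^2)^2)) (at u)"
proof -
  have u2: "u^2 - 1 \<noteq> 0" using assms by (auto simp: power2_eq_1_iff)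
  have p: "\<beta>^2 + u^2 > 0" using b by (simp add: add_pos_nonneg)
  have p1: "1 + \<beta>^2 > 0" by (simp add: add_pos_nonneg)
  have q: "((\<lambda>u. (u^2-1)/(2*(1+\<beta>^2)*(\<beta>^2+u^2))) has_real_derivative u/(\<beta>^2+u^2)^2) (at u)"
  proof -
    have "((\<lambda>u. (u^2-1)/(2*(1+\<beta>^2)*(\<beta>^2+u^2))) has_real_derivative
       ((2*u)*(2*(1+\<beta>^2)*(\<beta>^2+u^2)) - (u^2-1)*(2*(1+\<beta>^2)*(2*u)))/(2*(1+\<beta>^2)*(\<beta>^2+u^2))^2) (at u)"
      using p p1 by (auto intro!: derivative_eq_intros simp: power2_eq_square)
    moreover have "((2*u)*(2*(1+\<beta>^2)*(\<beta>^2+u^2)) - (u^2-1)*(2*(1+\<beta>^2)*(2*u))) = 4*u*(1+\<beta>^2)^2"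
      by (simp add: algebra_simps power2_eq_square)
    moreover have "(2*(1+\<beta>^2)*(\<beta>^2+u^2))^2 = 4*(1+\<beta>^2)^2*(\<beta>^2+u^2)^2"
      by (simp add: power2_eq_square algebra_simps)
    ultimately show ?thesis using p p1 by (simp add: field_simps)
  qed
  have r: "((\<lambda>u. arctan(u/\<beta>)/(\<beta>*(1+\<beta>^2))) has_real_derivative 1/((1+\<beta>^2)*(\<beta>^2+u^2))) (at u)"
  proof -
    have "((\<lambda>u. arctan(u/\<beta>)/(\<beta>*(1+\<beta>^2))) has_real_derivative (inverse (1 + (u/\<beta>)^2) * (1/\<beta>)) /(\<beta>*(1+\<beta>^2))) (at u)"
      by (intro DERIV_cdivide DERIV_chain2[OF DERIV_arctan DERIV_cdivide[OF DERIV_ident]])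
    moreover have "1 + (u/\<beta>)^2 = (\<beta>^2+u^2)/\<beta>^2" using b by (simp add: field_simps)
    moreover have "(inverse ((\<beta>^2+u^2)/\<beta>^2) * (1/\<beta>)) /(\<beta>*(1+\<beta>^2)) = 1/((1+\<beta>^2)*(\<beta>^2+u^2))"
      using aux1[of "\<beta>^2+u^2" "1+\<beta>^2" \<beta>] p b p1 by (simp add: mult.commute)
    ultimately show ?thesis by simp
  qed
  have "(GG \<beta> has_real_derivative
      LL u * (u/(\<beta>^2+u^2)^2) + (-2/(u^2-1)) * ((u^2-1)/(2*(1+\<beta>^2)*(\<beta>^2+u^2))) + 1/((1+\<beta>^2)*(\<beta>^2+u^2))) (at u)"
  proof -
    have e: "GG \<beta> = (\<lambda>u. LL u * ((u^2-1)/(2*(1+\<beta>^2)*(\<beta>^2+u^2))) + arctan(u/\<beta>)/(\<beta>*(1+\<beta>^2)))"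
      unfolding GG_def by auto
    show ?thesis unfolding e
      by (rule DERIV_add[OF DERIV_mult'[OF LL_deriv[OF assms(2,3)] q] r])
  qed
  moreover have "(-2/(u^2-1)) * ((u^2-1)/(2*(1+\<beta>^2)*(\<beta>^2+u^2))) = -1/((1+\<beta>^2)*(\<beta>^2+u^2))"
    using aux2[of "u^2-1" "\<beta>^2+u^2" "1+\<beta>^2"] u2 p p1 by simp
  ultimately show ?thesis by simp
qed


lemma xlnx_cont: "isCont (\<lambda>x::real. x * ln \<bar>x\<bar>) x"
proof (cases "x = 0")
  case True
  have l: "((\<lambda>x::real. x * ln \<bar>x\<bar>) \<longlongrightarrow> 0) (at_left 0)" by real_asymp
  have r: "((\<lambda>x::real. x * ln \<bar>x\<bar>) \<longlongrightarrow> 0) (at_right 0)" by real_asymp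
  have "((\<lambda>x::real. x * ln \<bar>x\<bar>) \<longlongrightarrow> 0) (at 0)"
    using l r by (simp add: filterlim_split_at)
  then show ?thesis using True by (simp add: isCont_def)
next
  case False
  then show ?thesis by (intro continuous_intros) auto
qed

lemma shift_cont: "isCont (\<lambda>u::real. (u + c) * ln \<bar>u + c\<bar>) u"
  using isCont_o2[where f="\<lambda>u. u+c" and g="\<lambda>x. x*ln \<bar>x\<bar>", OF _ xlnx_cont] by simp

lemma LL_split: "LL u * (u^2-1) = (u-1)*((u+1)*ln \<bar>u+1\<bar>) - (u+1)*((u + -1)*ln \<bar>u + -1\<bar>)"
proof (cases "u = 1 \<or> u = -1")
  case True
  then show ?thesis by (auto simp: LL_def)
next
  case False
  then have "\<bar>u+1\<bar> > 0" "\<bar>u-1\<bar> > 0" by auto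
  then have e: "LL u = ln \<bar>u+1\<bar> - ln \<bar>u-1\<bar>" unfolding LL_def by (simp add: ln_div)
  show ?thesis unfolding e by (simp add: algebra_simps power2_eq_square)
qed

lemma GG_eq: "GG \<beta> = (\<lambda>u. ((u-1)*((u+1)*ln \<bar>u+1\<bar>) - (u+1)*((u + -1)*ln \<bar>u + -1\<bar>))/(2*(1+\<beta>^2)*(\<beta>^2+u^2)) + arctan(u/\<beta>)/(\<beta>*(1+\<beta>^2)))"
  unfolding GG_def by (rule ext) (simp add: LL_split)

lemma GG_cont: assumes "\<beta> > 0" shows "isCont (GG \<beta>) u"
proof -
  have "2*(1+\<beta>^2)*(\<beta>^2+u^2) \<noteq> 0" using assms
    by (metis add_pos_nonneg mult_pos_pos zero_less_numeral zero_less_power less_numeral_extra(3) zero_le_power2 zero_less_one add_pos_pos)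
  then show ?thesis unfolding GG_eq
    by (intro continuous_intros shift_cont) (use assms in auto)
qed

lemma GG_lim: assumes "\<beta> > 0" shows "(GG \<beta> \<longlongrightarrow> pi/(2*\<beta>*(1+\<beta>^2))) at_top"
proof -
  have a: "((\<lambda>u. LL u) \<longlongrightarrow> 0) at_top" unfolding LL_def by real_asymp
  have b: "((\<lambda>u. (u^2-1)/(2*(1+\<beta>^2)*(\<beta>^2+u^2))) \<longlongrightarrow> 1/(2*(1+\<beta>^2))) at_top"
  proof -
    have sq: "filterlim (\<lambda>u::real. u^2) at_top at_top" by real_asymp
    have "filterlim (\<lambda>u::real. \<beta>^2 + u^2) at_top at_top"
      by (rule filterlim_tendsto_add_at_top[OF tendsto_const sq])
    then have z: "((\<lambda>u. (1+\<beta>^2)/(\<beta>^2+u^2)) \<longlongrightarrow> 0) at_top"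
      by (intro tendsto_divide_0[OF tendsto_const] filterlim_at_top_imp_at_infinity)
    have "((\<lambda>u. (1 - (1+\<beta>^2)/(\<beta>^2+u^2))/(2*(1+\<beta>^2))) \<longlongrightarrow> (1 - 0)/(2*(1+\<beta>^2))) at_top"
      by (intro tendsto_intros z) (smt (verit) zero_le_power2)
    moreover have "\<And>u. (1 - (1+\<beta>^2)/(\<beta>^2+u^2))/(2*(1+\<beta>^2)) = (u^2-1)/(2*(1+\<beta>^2)*(\<beta>^2+u^2))"
    proof -
      fix u :: real
      have "\<beta>^2+u^2 > 0" using assms by (simp add: add_pos_nonneg)
      moreover have "1+\<beta>^2 > 0" by (simp add: add_pos_nonneg)
      ultimately show "(1 - (1+\<beta>^2)/(\<beta>^2+u^2))/(2*(1+\<beta>^2)) = (u^2-1)/(2*(1+\<beta>^2)*(\<beta>^2+u^2))"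
        using aux3[of "\<beta>^2+u^2" "1+\<beta>^2"] by simp
    qed
    ultimately show ?thesis by simp
  qed
  have c: "((\<lambda>u. arctan(u/\<beta>)) \<longlongrightarrow> pi/2) at_top"
    using assms by real_asymp
  have "((\<lambda>u. LL u * ((u^2-1)/(2*(1+\<beta>^2)*(\<beta>^2+u^2))) + arctan(u/\<beta>)/(\<beta>*(1+\<beta>^2))) \<longlongrightarrow> 0 * (1/(2*(1+\<beta>^2))) + (pi/2)/(\<beta>*(1+\<beta>^2))) at_top"
    by (rule tendsto_add[OF tendsto_mult[OF a b] tendsto_divide[OF c tendsto_const]])
       (use assms in \<open>smt (verit) mult_pos_pos zero_le_power2\<close>)
  moreover have "GG \<beta> = (\<lambda>u. LL u * ((u^2-1)/(2*(1+\<beta>^2)*(\<beta>^2+u^2))) + arctan(u/\<beta>)/(\<beta>*(1+\<beta>^2)))"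
    unfolding GG_def by auto
  ultimately show ?thesis by (simp add: mult.assoc)
qed

lemma K_eq:
  assumes "0 < \<sigma>" "\<sigma> < pi/2" "0 \<le> s" "s < pi/2"
  shows "kernK s \<sigma> = LL (cot \<sigma> * tan s)"
proof -
  have S: "sin \<sigma> > 0" using assms by (intro sin_gt_zero) auto
  have C: "cos s > 0" using assms by (intro cos_gt_zero_pi) auto
  define u where "u = cot \<sigma> * tan s"
  have "(u+1)/(u-1) = ((u+1)*(sin \<sigma> * cos s))/((u-1)*(sin \<sigma> * cos s))"
    using S C by simp
  also have "(u+1)*(sin \<sigma> * cos s) = sin (s+\<sigma>)"
    using S C unfolding u_def cot_def tan_def by (simp add: sin_add field_simps)
  also have "(u-1)*(sin \<sigma> * cos s) = sin (s-\<sigma>)"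
    using S C unfolding u_def cot_def tan_def by (simp add: sin_diff field_simps)
  finally show ?thesis unfolding kernK_def LL_def u_def by simp
qed

lemma LL_nonneg: assumes "u \<ge> 0" shows "LL u \<ge> 0"
proof (cases "u = 1")
  case True then show ?thesis by (simp add: LL_def)
next
  case False
  then have "\<bar>u-1\<bar> > 0" by auto
  moreover have "\<bar>u+1\<bar> \<ge> \<bar>u-1\<bar>" using assms by auto
  ultimately have "\<bar>(u+1)/(u-1)\<bar> \<ge> 1" by (simp add: abs_divide)
  then show ?thesis unfolding LL_def by simp
qed

lemma K_nonneg:
  assumes "0 < \<sigma>" "\<sigma> < pi/2" "0 \<le> s" "s \<le> pi/2"
  shows "kernK s \<sigma> \<ge> 0"
proof (cases "s = pi/2")
  case True
  then show ?thesis unfolding True by (simp add: kernK_def sin_add sin_diff)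
next
  case False
  have "cot \<sigma> > 0" using assms unfolding cot_def
    by (intro divide_pos_pos cos_gt_zero sin_gt_zero) auto
  moreover have "tan s \<ge> 0" using assms False unfolding tan_def by (intro divide_nonneg_pos sin_ge_zero cos_gt_zero_pi) auto
  ultimately show ?thesis using K_eq[OF assms(1,2,3)] assms False LL_nonneg by auto
qed

definition WW :: "real \<Rightarrow> real \<Rightarrow> real \<Rightarrow> real" where
  "WW c \<beta> s = 2*\<beta>*(c*tan s)*(c/(cos s)^2)/(\<beta>^2+(c*tan s)^2)^2"

lemma aux4: fixes S co c :: real assumes "S > 0" "co > 0" "c > 0" "S^2 + co^2 = 1"
  shows "(c*(S/co))*(c/co^2)/(c*(S/co))^2 - (c*(S/co))*(c/co^2)/(c^2+(c*(S/co))^2) = co/S"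
proof -
  have 1: "(c*(S/co))*(c/co^2)/(c*(S/co))^2 = 1/(co*S)"
    using assms by (simp add: field_simps power2_eq_square)
  have e: "c^2+(c*(S/co))^2 = c^2/co^2"
  proof -
    have "c^2+(c*(S/co))^2 = c^2*(co^2 + S^2)/co^2" using assms(1-3) by (simp add: field_simps power2_eq_square)
    then show ?thesis using assms(4) by (simp add: add.commute)
  qed
  have 2: "(c*(S/co))*(c/co^2)/(c^2+(c*(S/co))^2) = S/co"
    unfolding e using assms by (simp add: field_simps power2_eq_square)
  have 3: "1/(co*S) - S/co = (1 - S^2)/(co*S)" using assms by (simp add: field_simps power2_eq_square)
  have "1 - S^2 = co^2" using assms(4) by simp
  then show ?thesis unfolding 1 2 3 using assms by (simp add: power2_eq_square)
qed

lemma inner_beta: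
  assumes c: "c > 0" and s: "0 < s" "s < pi/2"
  shows "((\<lambda>\<beta>. WW c \<beta> s) has_integral cot s) {0..c}"
proof -
  define u where "u = c * tan s"
  define A where "A = u * (c/(cos s)^2)"
  have S: "sin s > 0" using s by (intro sin_gt_zero) auto
  have C: "cos s > 0" using s by (intro cos_gt_zero_pi) auto
  have u: "u > 0" unfolding u_def tan_def using S C c by simp
  have d: "((\<lambda>\<beta>. - A/(\<beta>^2+u^2)) has_real_derivative WW c \<beta> s) (at \<beta> within {0..c})" for \<beta>
  proof -
    have p: "\<beta>^2+u^2 > 0" using u by (simp add: add_nonneg_pos)
    have "((\<lambda>\<beta>. - A/(\<beta>^2+u^2)) has_real_derivative A * (2*\<beta>) / (\<beta>^2+u^2)^2) (at \<beta> within {0..c})"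
      using p by (auto intro!: derivative_eq_intros simp: power2_eq_square field_simps)
    moreover have "A * (2*\<beta>) / (\<beta>^2+u^2)^2 = WW c \<beta> s"
      unfolding WW_def A_def u_def by (simp add: algebra_simps)
    ultimately show ?thesis by simp
  qed
  have "((\<lambda>\<beta>. WW c \<beta> s) has_integral ((- A/(c^2+u^2)) - (- A/(0^2+u^2)))) {0..c}"
    by (rule fundamental_theorem_of_calculus)
       (use c d in \<open>auto simp: has_real_derivative_iff_has_vector_derivative[symmetric]\<close>)
  moreover have "(- A/(c^2+u^2)) - (- A/(0^2+u^2)) = cot s"
  proof -
    have "u = c*(sin s/cos s)" unfolding u_def tan_def by simp
    then have "(- A/(c^2+u^2)) - (- A/(0^2+u^2)) = (c*(sin s/cos s))*(c/(cos s)^2)/(c*(sin s/cos s))^2 - (c*(sin s/cos s))*(c/(cos s)^2)/(c^2+(c*(sin s/cos s))^2)"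
      unfolding A_def by simp
    also have "\<dots> = cos s / sin s" by (rule aux4) (use S C c in auto)
    finally show ?thesis by (simp add: cot_def)
  qed
  ultimately show ?thesis by simp
qed

lemma outer:
  assumes "c \<ge> 0"
  shows "((\<lambda>\<beta>. pi/(1+\<beta>^2)) has_integral (pi * arctan c)) {0..c}"
proof -
  have "((\<lambda>\<beta>. pi/(1+\<beta>^2)) has_integral (pi * arctan c - pi * arctan 0)) {0..c}"
  proof (rule fundamental_theorem_of_calculus)
    fix x :: real
    have "((\<lambda>x. pi * arctan x) has_real_derivative pi * inverse (1 + x^2)) (at x within {0..c})"
      by (intro DERIV_cmult DERIV_arctan[THEN has_field_derivative_at_within])
    then show "((\<lambda>x. pi * arctan x) has_vector_derivative pi/(1+x^2)) (at x within {0..c})"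
      by (simp add: has_real_derivative_iff_has_vector_derivative[symmetric] divide_inverse)
  qed (use assms in auto)
  then show ?thesis by simp
qed

lemma aux5: fixes p q r t :: real assumes "(p/q)*(r/t) = 1" "q > 0" "t > 0"
  shows "p*r = q*t"
  using assms by (simp add: field_simps)

lemma aux6: fixes b l w dd c cc :: real
  shows "2*b*((l * w/dd)*(c*inverse cc)) = l*(2*b*w*(c/cc)/dd)"
  by (simp add: divide_inverse)

lemma inner_s:
  assumes \<sigma>: "0 < \<sigma>" "\<sigma> < pi/2" and b: "\<beta> > 0"
  shows "((\<lambda>s. kernK s \<sigma> * WW (cot \<sigma>) \<beta> s) has_integral pi/(1+\<beta>^2)) {0..pi/2}"
proof -
  define c where "c = cot \<sigma>"
  have c: "c > 0" unfolding c_def cot_def using \<sigma>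
    by (intro divide_pos_pos cos_gt_zero_pi sin_gt_zero) auto
  define H where "H s = 2*\<beta>*(if s = pi/2 then pi/(2*\<beta>*(1+\<beta>^2)) else GG \<beta> (c*tan s))" for s
  have GG0: "GG \<beta> 0 = 0" by (simp add: GG_def LL_def)
  have ct: "isCont (\<lambda>s. 2*\<beta>*GG \<beta> (c*tan s)) x" if "cos x \<noteq> 0" for x
  proof -
    have "isCont (\<lambda>s. c * tan s) x" using that by (intro continuous_intros) auto
    from isCont_o2[OF this GG_cont[OF b]] have "isCont (\<lambda>s. GG \<beta> (c*tan s)) x" .
    then show ?thesis by (intro continuous_intros)
  qed
  have ev: "eventually (\<lambda>s. 2*\<beta>*GG \<beta> (c*tan s) = H s) (at z within A)" for z A
    by (rule eventually_mono[OF eventually_neq_at_within[of "pi/2"]]) (simp add: H_def)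
  have cont: "continuous_on {0..pi/2} H"
  proof (rule continuous_on_IccI)
    have "((\<lambda>s. 2*\<beta>*GG \<beta> (c*tan s)) \<longlongrightarrow> H 0) (at 0)"
      using ct[of 0] by (simp add: isCont_def H_def)
    then have "((\<lambda>s. 2*\<beta>*GG \<beta> (c*tan s)) \<longlongrightarrow> H 0) (at_right 0)"
      by (rule tendsto_within_subset) auto
    then show "(H \<longlongrightarrow> H 0) (at_right 0)" by (rule Lim_transform_eventually) (rule ev)
  next
    have f: "filterlim (\<lambda>s. c * tan s) at_top (at_left (pi/2))"
      by (rule filterlim_tendsto_pos_mult_at_top[OF tendsto_const c filterlim_tan_at_left])
    have "((\<lambda>s. GG \<beta> (c*tan s)) \<longlongrightarrow> pi/(2*\<beta>*(1+\<beta>^2))) (at_left (pi/2))"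
      by (rule filterlim_compose[OF GG_lim[OF b] f])
    then have "((\<lambda>s. 2*\<beta>*GG \<beta> (c*tan s)) \<longlongrightarrow> 2*\<beta>*(pi/(2*\<beta>*(1+\<beta>^2)))) (at_left (pi/2))"
      by (intro tendsto_intros)
    then have "((\<lambda>s. 2*\<beta>*GG \<beta> (c*tan s)) \<longlongrightarrow> H (pi/2)) (at_left (pi/2))"
      by (simp add: H_def)
    then show "(H \<longlongrightarrow> H (pi/2)) (at_left (pi/2))" by (rule Lim_transform_eventually) (rule ev)
  next
    fix x :: real assume x: "0 < x" "x < pi/2"
    then have "cos x \<noteq> 0" using cos_gt_zero_pi[of x] by auto
    then have "((\<lambda>s. 2*\<beta>*GG \<beta> (c*tan s)) \<longlongrightarrow> H x) (at x)"
      using ct[of x] x by (simp add: isCont_def H_def)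
    then show "(H \<longlongrightarrow> H x) (at x)" by (rule Lim_transform_eventually) (rule ev)
  qed simp
  have deriv: "(H has_vector_derivative kernK x \<sigma> * WW c \<beta> x) (at x)"
    if x: "x \<in> {0<..<pi/2} - {\<sigma>}" for x
  proof -
    have S: "sin x > 0" using x by (intro sin_gt_zero) auto
    have C: "cos x > 0" using x by (intro cos_gt_zero_pi) auto
    define u where "u = c * tan x"
    have u0: "u > 0" unfolding u_def tan_def using S C c by simp
    have u1: "u \<noteq> 1"
    proof
      assume "u = 1"
      then have "c * tan x = 1" by (simp add: u_def)
      then have "(cos \<sigma> / sin \<sigma>) * (sin x / cos x) = 1"
        by (simp only: c_def cot_def tan_def)
      moreover have "sin \<sigma> > 0" using \<sigma> by (intro sin_gt_zero) auto
      ultimately have "cos \<sigma> * sin x = sin \<sigma> * cos x"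
        using C aux5 by blast
      then have "sin (x - \<sigma>) = 0" by (simp add: sin_diff mult.commute)
      then have "x - \<sigma> = 0" by (rule sin_eq_0_pi[rotated 2]) (use x \<sigma> in auto)
      then show False using x by auto
    qed
    have d1: "((\<lambda>s. c*tan s) has_real_derivative c * inverse((cos x)^2)) (at x)"
      by (rule DERIV_cmult[OF DERIV_tan]) (use C in auto)
    have d2: "(GG \<beta> has_real_derivative LL u * u/(\<beta>^2+u^2)^2) (at (c*tan x))"
      unfolding u_def by (rule GG_deriv[OF b]) (use u0 u1 in \<open>auto simp: u_def\<close>)
    have "((\<lambda>s. 2*\<beta>*GG \<beta> (c*tan s)) has_real_derivative
        2*\<beta>*((LL u * u/(\<beta>^2+u^2)^2) * (c * inverse ((cos x)^2)))) (at x)"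
      by (rule DERIV_cmult[OF DERIV_chain2[OF d2 d1]])
    then have "(H has_real_derivative
        2*\<beta>*((LL u * u/(\<beta>^2+u^2)^2) * (c * inverse ((cos x)^2)))) (at x)"
      by (rule has_field_derivative_transform_within_open[of _ _ _ "{0<..<pi/2}"])
         (use x in \<open>auto simp: H_def\<close>)
    moreover have "2*\<beta>*((LL u * u/(\<beta>^2+u^2)^2) * (c * inverse ((cos x)^2))) = kernK x \<sigma> * WW c \<beta> x"
      using K_eq[OF \<sigma>, of x] x aux6[of \<beta> "LL u" u "(\<beta>^2+u^2)^2" c "(cos x)^2"]
      unfolding WW_def u_def c_def by simp
    ultimately show ?thesis by (simp add: has_real_derivative_iff_has_vector_derivative)
  qed
  have "((\<lambda>x. kernK x \<sigma> * WW c \<beta> x) has_integral (H (pi/2) - H 0)) {0..pi/2}"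
    by (rule fundamental_theorem_of_calculus_interior_strong[of "{\<sigma>}"]) (use deriv cont in auto)
  moreover have "H (pi/2) - H 0 = pi/(1+\<beta>^2)" using b GG0 by (simp add: H_def)
  ultimately show ?thesis by (simp add: c_def)
qed

lemma tan_nonneg': "0 \<le> s \<Longrightarrow> s \<le> pi/2 \<Longrightarrow> tan s \<ge> 0"
  unfolding tan_def by (intro divide_nonneg_nonneg sin_ge_zero cos_ge_zero) auto

lemma WW_nonneg: assumes "c > 0" "0 \<le> \<beta>" "0 \<le> s" "s \<le> pi/2" shows "WW c \<beta> s \<ge> 0"
  using assms tan_nonneg'[of s] unfolding WW_def by (intro divide_nonneg_nonneg mult_nonneg_nonneg) auto

lemma cot_nonneg': "0 \<le> s \<Longrightarrow> s \<le> pi/2 \<Longrightarrow> cot s \<ge> 0"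
  unfolding cot_def by (intro divide_nonneg_nonneg sin_ge_zero cos_ge_zero) auto

lemma F_value:
  assumes \<sigma>: "0 < \<sigma>" "\<sigma> < pi/2"
  shows "(\<integral>\<^sup>+ s. ennreal (indicator {0..pi/2} s * (kernK s \<sigma> * cot s)) \<partial>lborel) = ennreal (pi * (pi/2 - \<sigma>))"
proof -
  define c where "c = cot \<sigma>"
  have c: "c > 0" unfolding c_def cot_def using \<sigma>
    by (intro divide_pos_pos cos_gt_zero_pi sin_gt_zero) auto
  define f where "f s \<beta> = ennreal (indicator {0..pi/2} s * indicator {0..c} \<beta> * kernK s \<sigma> * WW c \<beta> s)" for s \<beta>
  have meas: "(\<lambda>(s,\<beta>). f s \<beta>) \<in> borel_measurable (lborel \<Otimes>\<^sub>M lborel)"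
    unfolding f_def kernK_def WW_def tan_def by measurable
  have step1: "(\<integral>\<^sup>+ s. ennreal (indicator {0..pi/2} s * (kernK s \<sigma> * cot s)) \<partial>lborel)
      = (\<integral>\<^sup>+ s. (\<integral>\<^sup>+ \<beta>. f s \<beta> \<partial>lborel) \<partial>lborel)"
  proof (rule nn_integral_cong)
    fix s :: real
    show "ennreal (indicator {0..pi/2} s * (kernK s \<sigma> * cot s)) = (\<integral>\<^sup>+ \<beta>. f s \<beta> \<partial>lborel)"
    proof (cases "s \<in> {0..pi/2}")
      case False
      then show ?thesis by (simp add: f_def)
    next
      case True
      have K0: "kernK s \<sigma> \<ge> 0" using K_nonneg[OF \<sigma>] True by auto
      have "(\<integral>\<^sup>+ \<beta>. f s \<beta> \<partial>lborel) = (\<integral>\<^sup>+ \<beta>. ennreal (kernK s \<sigma>) * (ennreal (WW c \<beta> s) * indicator {0..c} \<beta>) \<partial>lborel)"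
        using True K0 WW_nonneg[OF c] unfolding f_def
        by (intro nn_integral_cong) (auto simp: indicator_def ennreal_mult)
      also have "\<dots> = ennreal (kernK s \<sigma>) * (\<integral>\<^sup>+ \<beta>. ennreal (WW c \<beta> s) * indicator {0..c} \<beta> \<partial>lborel)"
        by (rule nn_integral_cmult) (unfold WW_def tan_def, measurable)
      also have "(\<integral>\<^sup>+ \<beta>. ennreal (WW c \<beta> s) * indicator {0..c} \<beta> \<partial>lborel) = ennreal (cot s)"
      proof (cases "s = 0 \<or> s = pi/2")
        case True
        then show ?thesis
        proof
          assume "s = 0" then show ?thesis by (simp add: WW_def tan_def cot_def)
        next
          assume "s = pi/2"
          then have "cos s = 0" using cos_pi_half by metis
          then show ?thesis by (simp add: WW_def tan_def cot_def)
        qed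
      next
        case False
        then have s: "0 < s" "s < pi/2" using \<open>s \<in> {0..pi/2}\<close> by auto
        show ?thesis
          by (rule nn_integral_has_integral_lebesgue'[OF _ inner_beta[OF c s]])
             (use WW_nonneg[OF c] s in auto)
      qed
      finally show ?thesis using True K0 cot_nonneg'[of s] by (simp add: ennreal_mult)
    qed
  qed
  have step2: "(\<integral>\<^sup>+ s. (\<integral>\<^sup>+ \<beta>. f s \<beta> \<partial>lborel) \<partial>lborel) = (\<integral>\<^sup>+ \<beta>. (\<integral>\<^sup>+ s. f s \<beta> \<partial>lborel) \<partial>lborel)"
    by (rule lborel_pair.Fubini'[symmetric]) (use meas in simp)
  have step3: "(\<integral>\<^sup>+ \<beta>. (\<integral>\<^sup>+ s. f s \<beta> \<partial>lborel) \<partial>lborel) = (\<integral>\<^sup>+ \<beta>. ennreal (pi/(1+\<beta>^2)) * indicator {0..c} \<beta> \<partial>lborel)"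
  proof (rule nn_integral_cong_AE)
    show "AE \<beta> in lborel. (\<integral>\<^sup>+ s. f s \<beta> \<partial>lborel) = ennreal (pi/(1+\<beta>^2)) * indicator {0..c} \<beta>"
    proof (rule eventually_mono[OF AE_lborel_singleton[of 0]])
      fix \<beta> :: real assume "\<beta> \<noteq> 0"
      show "(\<integral>\<^sup>+ s. f s \<beta> \<partial>lborel) = ennreal (pi/(1+\<beta>^2)) * indicator {0..c} \<beta>"
      proof (cases "\<beta> \<in> {0..c}")
        case False then show ?thesis by (simp add: f_def)
      next
        case True
        then have b: "\<beta> > 0" using \<open>\<beta> \<noteq> 0\<close> by auto
        have "(\<integral>\<^sup>+ s. f s \<beta> \<partial>lborel) = (\<integral>\<^sup>+ s. ennreal (kernK s \<sigma> * WW (cot \<sigma>) \<beta> s) * indicator {0..pi/2} s \<partial>lborel)"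
          using True unfolding f_def c_def by (intro nn_integral_cong) (auto simp: indicator_def)
        also have "\<dots> = ennreal (pi/(1+\<beta>^2))"
          by (rule nn_integral_has_integral_lebesgue'[OF _ inner_s[OF \<sigma> b]])
             (use K_nonneg[OF \<sigma>] WW_nonneg[OF c, of \<beta>] b in \<open>auto simp: c_def\<close>)
        finally show ?thesis using True by simp
      qed
    qed
  qed
  have step4: "(\<integral>\<^sup>+ \<beta>. ennreal (pi/(1+\<beta>^2)) * indicator {0..c} \<beta> \<partial>lborel) = ennreal (pi * arctan c)"
    by (rule nn_integral_has_integral_lebesgue'[OF _ outer]) (use c in \<open>auto intro!: divide_nonneg_pos add_pos_nonneg\<close>)
  have step5: "arctan c = pi/2 - \<sigma>"
    unfolding c_def tan_cot'[symmetric] using \<sigma> by (intro arctan_tan) auto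
  show ?thesis using step1 step2 step3 step4 step5 by simp
qed

lemma aux7: fixes C k sn E :: real assumes "C > 0" "k \<ge> 0" "sn \<le> 1" "E \<ge> 1"
  shows "C*(sn*k)/E \<le> C*k"
proof (cases "sn*k \<le> 0")
  case True
  then have "C*(sn*k)/E \<le> 0" using assms by (simp add: divide_nonpos_pos mult_nonneg_nonpos)
  also have "0 \<le> C*k" using assms by simp
  finally show ?thesis .
next
  case False
  then have "C*(sn*k) \<ge> 0" using assms by simp
  then have "C*(sn*k)/E \<le> C*(sn*k)/1"
    using assms by (intro divide_left_mono) auto
  then have "C*(sn*k)/E \<le> C*(sn*k)" by simp
  also have "\<dots> \<le> C*k" using assms mult_right_mono[of sn 1 k] by simp
  finally show ?thesis .
qed

theorem theorem4p7:
  fixes \<alpha> :: real and \<zeta> :: "real \<Rightarrow> real"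
  assumes alpha_pos: "\<alpha> > 0"
    and L2: "isL2 \<zeta>"
    and nonneg: "AE s in lebesgue. s \<in> {0..pi/2} \<longrightarrow> \<zeta> s \<ge> 0"
    and fixpt: "AE \<sigma> in lebesgue. \<sigma> \<in> {0<..pi/2} \<longrightarrow> \<zeta> \<sigma> = Phi \<alpha> \<zeta> \<sigma>"
    and norm_bd: "L2norm \<zeta> \<le> 9 * sqrt pi / 2"
    and range: "\<forall>\<sigma>\<in>{0<..<pi/2}. 0 \<le> \<sigma> + (1/3) * opH \<zeta> \<sigma> \<and> \<sigma> + (1/3) * opH \<zeta> \<sigma> \<le> pi"
    and alpha_big: "\<alpha> > 5 / sqrt 8"
  shows "\<forall>\<sigma>\<in>{0<..<pi/2}. \<sigma> + (1/3) * opH \<zeta> \<sigma> < pi / 2"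
proof
  fix \<sigma> :: real assume "\<sigma> \<in> {0<..<pi/2}"
  then have \<sigma>: "0 < \<sigma>" "\<sigma> < pi/2" by auto
  define C where "C = 3/(\<alpha>*pi)"
  have C: "C > 0" unfolding C_def using alpha_pos by simp
  have zm[measurable]: "\<zeta> \<in> borel_measurable lebesgue" using L2 unfolding isL2_def by auto
  have AEbound: "AE s in lebesgue. s \<in> {0..pi/2} \<longrightarrow> \<zeta> s \<le> C * cot s"
  proof -
    have "AE s in lebesgue. s \<noteq> 0" by (rule AE_completion[OF AE_lborel_singleton])
    then show ?thesis using fixpt
    proof eventually_elim
      case (elim s)
      show ?case
      proof
        assume s: "s \<in> {0..pi/2}"
        then have s': "s \<in> {0<..pi/2}" using elim by auto
        have I: "0 \<le> (LINT x:{0..s}|lebesgue. \<zeta> x)"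
          unfolding set_lebesgue_integral_def
          by (rule integral_nonneg_AE) (rule eventually_mono[OF nonneg], use s' in \<open>auto simp: indicator_def\<close>)
        have "\<zeta> s = Phi \<alpha> \<zeta> s" using elim s' by auto
        also have "\<dots> = C * (sin (s + (1/3) * opH \<zeta> s) * cot s) / exp (LINT x:{0..s}|lebesgue. \<zeta> x)"
          unfolding Phi_def C_def by simp
        also have "\<dots> \<le> C * cot s"
          by (rule aux7) (use C cot_nonneg'[of s] s I in auto)
        finally show "\<zeta> s \<le> C * cot s" .
      qed
    qed
  qed
  define g where "g s = indicator {0..pi/2} s *\<^sub>R (kernK s \<sigma> * \<zeta> s)" for s
  have km[measurable]: "(\<lambda>s. kernK s \<sigma>) \<in> borel_measurable lebesgue"
    by (rule measurable_completion) (unfold kernK_def, measurable)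
  have Im[measurable]: "{0..pi/2::real} \<in> sets lebesgue"
    by (rule sets_completionI_sets) simp
  have gm: "g \<in> borel_measurable lebesgue" unfolding g_def by measurable
  have g0: "AE s in lebesgue. 0 \<le> g s"
    by (rule eventually_mono[OF nonneg]) (use K_nonneg[OF \<sigma>] in \<open>auto simp: g_def indicator_def\<close>)
  have "(\<integral>\<^sup>+ s. ennreal (g s) \<partial>lebesgue) \<le> (\<integral>\<^sup>+ s. ennreal (C * (indicator {0..pi/2} s * (kernK s \<sigma> * cot s))) \<partial>lebesgue)"
  proof (rule nn_integral_mono_AE)
    show "AE s in lebesgue. ennreal (g s) \<le> ennreal (C * (indicator {0..pi/2} s * (kernK s \<sigma> * cot s)))"
    proof (rule eventually_mono[OF AEbound])
      fix s assume h: "s \<in> {0..pi/2} \<longrightarrow> \<zeta> s \<le> C * cot s"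
      show "ennreal (g s) \<le> ennreal (C * (indicator {0..pi/2} s * (kernK s \<sigma> * cot s)))"
      proof (cases "s \<in> {0..pi/2}")
        case True
        have K0: "kernK s \<sigma> \<ge> 0" using K_nonneg[OF \<sigma>] True by auto
        have "kernK s \<sigma> * \<zeta> s \<le> kernK s \<sigma> * (C * cot s)" using h True K0 by (intro mult_left_mono) auto
        then show ?thesis using True by (intro ennreal_leI) (simp add: g_def algebra_simps)
      qed (simp add: g_def)
    qed
  qed
  also have "\<dots> = (\<integral>\<^sup>+ s. ennreal (C * (indicator {0..pi/2} s * (kernK s \<sigma> * cot s))) \<partial>lborel)"
    by (rule nn_integral_completion)
  also have "\<dots> = (\<integral>\<^sup>+ s. ennreal C * ennreal (indicator {0..pi/2} s * (kernK s \<sigma> * cot s)) \<partial>lborel)"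
    using C by (intro nn_integral_cong) (simp add: ennreal_mult')
  also have "\<dots> = ennreal C * (\<integral>\<^sup>+ s. ennreal (indicator {0..pi/2} s * (kernK s \<sigma> * cot s)) \<partial>lborel)"
    by (rule nn_integral_cmult) (unfold kernK_def cot_def, measurable)
  also have "\<dots> = ennreal (C * (pi * (pi/2 - \<sigma>)))"
    using F_value[OF \<sigma>] C \<sigma> by (simp add: ennreal_mult)
  finally have nnb: "(\<integral>\<^sup>+ s. ennreal (g s) \<partial>lebesgue) \<le> ennreal (C * (pi * (pi/2 - \<sigma>)))" .
  have "integral\<^sup>L lebesgue g = enn2real (\<integral>\<^sup>+ s. ennreal (g s) \<partial>lebesgue)"
    by (rule integral_eq_nn_integral[OF gm g0])
  also have "\<dots> \<le> C * (pi * (pi/2 - \<sigma>))"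
    by (rule enn2real_leI) (use C \<sigma> nnb in auto)
  finally have ib: "integral\<^sup>L lebesgue g \<le> C * (pi * (pi/2 - \<sigma>))" .
  have "opH \<zeta> \<sigma> = (1/pi) * integral\<^sup>L lebesgue g"
    unfolding opH_def g_def set_lebesgue_integral_def by simp
  also have "\<dots> \<le> (1/pi) * (C * (pi * (pi/2 - \<sigma>)))"
    using ib by (intro mult_left_mono) auto
  also have "\<dots> = 3 * (pi/2 - \<sigma>) / (\<alpha> * pi)" unfolding C_def by simp
  finally have "opH \<zeta> \<sigma> \<le> 3 * (pi/2 - \<sigma>) / (\<alpha> * pi)" .
  then have "(1/3) * opH \<zeta> \<sigma> \<le> (1/3) * (3 * (pi/2 - \<sigma>) / (\<alpha> * pi))"
    by (intro mult_left_mono) auto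
  also have "(1/3) * (3 * (pi/2 - \<sigma>) / (\<alpha> * pi)) = (pi/2 - \<sigma>) / (\<alpha> * pi)"
    by (simp only: times_divide_eq_right[symmetric] mult.assoc[symmetric])
  finally have oh: "(1/3) * opH \<zeta> \<sigma> \<le> (pi/2 - \<sigma>) / (\<alpha> * pi)" .
  have "sqrt 8 < 5" by (simp add: real_sqrt_less_iff[of 8 25, simplified] real_less_rsqrt)
  moreover have "0 < sqrt (8::real)" by simp
  ultimately have "5 / sqrt 8 > 1" by (simp add: less_divide_eq)
  then have "\<alpha> > 1" using alpha_big by linarith
  then have ap: "\<alpha> * pi > 1" using pi_gt3 by (smt (verit) mult_less_cancel_left1)
  have "(pi/2 - \<sigma>) / (\<alpha> * pi) < pi/2 - \<sigma>"
    using ap \<sigma> by (simp add: divide_less_eq)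
  then show "\<sigma> + (1/3) * opH \<zeta> \<sigma> < pi / 2" using oh by linarith
qed

end
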